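(* Let $\mathfrak{H}$ be a complete Heyting algebra and $\mathsf{i}\in\mathfrak{H}$. Then $$\bigwedge_{\mathsf{j}\in\mathfrak{H}}(\mathsf{j}\vee(\mathsf{j}\to\mathsf{i})) = \bigwedge\{\mathsf{h}\in\mathfrak{H}\mid \mathsf{h}\ge\mathsf{i}\text{ and }\mathsf{h}\text{ is }\mathsf{i}\text{-dense}\}.$$
   Context: For elements $\mathsf{h}\ge\mathsf{i}$ of a Heyting algebra, $\mathsf{h}$ is called $\mathsf{i}$-dense if for every $\mathsf{j}$ in the algebra, $\mathsf{h}\wedge\mathsf{j}=\mathsf{i}$ implies $\mathsf{j}=\mathsf{i}$. *)

theory Defs
  imports Main
begin

definition heyting_imp :: "('a::complete_lattice \<Rightarrow> 'a \<Rightarrow> 'a) \<Rightarrow> bool" where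
  "heyting_imp imp \<longleftrightarrow> (\<forall>a b c. inf a b \<le> c \<longleftrightarrow> a \<le> imp b c)"

definition dense_above :: "'a::complete_lattice \<Rightarrow> 'a \<Rightarrow> bool" where
  "dense_above i h \<longleftrightarrow> (\<forall>j. inf h j = i \<longrightarrow> j = i)"

end

theory Submission
  imports Defs
begin

theorem corollary4p5:
  fixes imp :: "'a::complete_lattice \<Rightarrow> 'a \<Rightarrow> 'a" and i :: 'a
  assumes "heyting_imp imp"
  shows "(INF j. sup j (imp j i)) = Inf {h. i \<le> h \<and> dense_above i h}"
proof (rule antisym)
  have R: "inf a b \<le> c \<longleftrightarrow> a \<le> imp b c" for a b c
    using assms unfolding heyting_imp_def by blast
  show "(INF j. sup j (imp j i)) \<le> Inf {h. i \<le> h \<and> dense_above i h}"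
  proof (rule Inf_greatest)
    fix h assume "h \<in> {h. i \<le> h \<and> dense_above i h}"
    hence ih: "i \<le> h" and d: "dense_above i h" by auto
    have "inf h (imp h i) \<le> i" using R[of "imp h i" h i] by (simp add: inf_commute)
    moreover have "i \<le> imp h i" using R[of i h i] by simp
    ultimately have "inf h (imp h i) = i" using ih by (simp add: antisym)
    hence "imp h i = i" using d unfolding dense_above_def by blast
    hence "sup h (imp h i) = h" using ih by (simp add: sup_absorb1)
    then show "(INF j. sup j (imp j i)) \<le> h" by (intro INF_lower2[of h]) simp_all
  qed
  show "Inf {h. i \<le> h \<and> dense_above i h} \<le> (INF j. sup j (imp j i))"
  proof (rule INF_greatest, rule Inf_lower, safe)
    fix j
    have "i \<le> imp j i" using R[of i j i] by simp
    thus "i \<le> sup j (imp j i)" by (meson le_supI2)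
    show "dense_above i (sup j (imp j i))"
      unfolding dense_above_def
    proof (intro allI impI)
      fix k assume k: "inf (sup j (imp j i)) k = i"
      have "inf j k \<le> inf (sup j (imp j i)) k" by (rule inf_mono) simp_all
      hence "inf j k \<le> i" using k by simp
      hence "k \<le> imp j i" using R[of k j i] by (simp add: inf_commute)
      hence "k \<le> sup j (imp j i)" by (meson le_supI2)
      thus "k = i" using k by (simp add: inf_absorb2)
    qed
  qed
qed

end
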